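(* Let $A,B$ be non-empty sets, $I$ a non-empty index set, $\{V_i\}_{i\in I}\subseteq\mathcal R(A)$, $\{W_i\}_{i\in I}\subseteq\mathcal R(B)$, ${\cal A}=(A,I,V_i)$, ${\cal B}=(B,I,W_i)$, let $R\in\mathcal R(A,B)$ be a uniform fuzzy relation and $Z\in\mathcal R(A,B)$ with $R\le Z$. Then $R$ is a solution to $WL^{2\text{-}5}(A,B,I,V_i,W_i,Z)$ if and only if all of the following hold: (i) $E_A^R$ is a solution to $WL^{1\text{-}4}(A,I,V_i,Z\circ Z^{-1})$; (ii) $E_B^R$ is a solution to $WL^{1\text{-}5}(B,I,W_i,Z^{-1}\circ Z)$; (iii) $\widetilde R$ is an isomorphism of the quotient fuzzy relational systems ${\cal A}/E_A^R$ and ${\cal B}/E_B^R$.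
   Context: $\mathcal L=(L,\wedge,\vee,\otimes,\to,0,1)$ is a complete residuated lattice; $x\leftrightarrow y=(x\to y)\wedge(y\to x)$. For non-empty sets $X,Y$, $\mathcal R(X,Y)$ is the set of fuzzy relations $X\times Y\to L$, $\mathcal R(X)=\mathcal R(X,X)$, ordered pointwise; $R^{-1}(y,x)=R(x,y)$; $(R\circ S)(x,t)=\bigvee_{y}R(x,y)\otimes S(y,t)$. For $R\in\mathcal R(A,B)$: kernel $E_A^R(a_1,a_2)=\bigwedge_{b\in B}R(a_1,b)\leftrightarrow R(a_2,b)$; co-kernel $E_B^R(b_1,b_2)=\bigwedge_{a\in A}R(a,b_1)\leftrightarrow R(a,b_2)$ (both fuzzy equivalences). $R$ is uniform if every $a$ has some $b$ with $R(a,b)=1$, every $b$ has some $a$ with $R(a,b)=1$, and $R(a,b_1)\otimes R(a,b_2)\le E_B^R(b_1,b_2)$ for all $a,b_1,b_2$. For uniform $R$, with $E=E_A^R$, $F=E_B^R$, the map $\widetilde R:A/E\to B/F$, $\widetilde R(E_a)=F_{\psi(a)}$, where $\psi:A\to B$ is any function with $R(a,\psi(a))=1$ for all $a$, is well defined and bijective. For a fuzzy equivalence $E$ on $X$ (reflexive, symmetric, $E(x,y)\otimes E(y,z)\le E(x,z)$): $E_x(y)=E(x,y)$, $X/E=\{E_x\}$; the quotient of ${\cal X}=(X,I,V_i)$ is ${\cal X}/E=(X/E,I,V_i^{X/E})$ with $V_i^{X/E}(E_{x_1},E_{x_2})=(E\circ V_i\circ E)(x_1,x_2)$. An isomorphism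 of $(X,I,V_i)$ and $(Y,I,W_i)$ is a bijection $\varphi$ with $V_i(x_1,x_2)=W_i(\varphi(x_1),\varphi(x_2))$ for all $x_1,x_2$, $i$. $WL^{2\text{-}5}(A,B,I,V_i,W_i,Z)$ (unknown $U\in\mathcal R(A,B)$): $V_i\circ U=U\circ W_i$ for all $i$, and $U\le Z$. For $\{V_i\}\subseteq\mathcal R(X)$, $W\in\mathcal R(X)$, unknown $U\in\mathcal R(X)$: $WL^{1\text{-}4}(X,I,V_i,W)$: $U\circ V_i\le V_i\circ U$ and $U^{-1}\circ V_i\le V_i\circ U^{-1}$ for all $i$, $U\le W$, $U^{-1}\le W$; $WL^{1\text{-}5}(X,I,V_i,W)$: $V_i\circ U\le U\circ V_i$ and $V_i\circ U^{-1}\le U^{-1}\circ V_i$ for all $i$, $U\le W$, $U^{-1}\le W$. *)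

theory Defs
  imports Main
begin

text \<open>Complete residuated lattice: a complete lattice (0 = bot, 1 = top) with a
commutative monoid operation rmult having unit top, and its residuum rimp
(adjointness: x rmult y <= z iff x <= rimp y z).\<close>

class cres_lattice = complete_lattice +
  fixes rmult :: "'a \<Rightarrow> 'a \<Rightarrow> 'a" (infixl "\<otimes>" 70)
    and rimp :: "'a \<Rightarrow> 'a \<Rightarrow> 'a"
  assumes rmult_assoc: "(x \<otimes> y) \<otimes> z = x \<otimes> (y \<otimes> z)"
    and rmult_commute: "x \<otimes> y = y \<otimes> x"
    and rmult_top: "x \<otimes> top = x"
    and residuation: "x \<otimes> y \<le> z \<longleftrightarrow> x \<le> rimp y z"

definition biimp :: "'l::cres_lattice \<Rightarrow> 'l \<Rightarrow> 'l" where
  "biimp x y = inf (rimp x y) (rimp y x)"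

text \<open>Fuzzy relations between (the carriers given by) types 'a and 'b.
Non-empty sets A, B, I are modelled by types (types are non-empty).\<close>

definition rcomp :: "('a \<Rightarrow> 'b \<Rightarrow> 'l::cres_lattice) \<Rightarrow> ('b \<Rightarrow> 'c \<Rightarrow> 'l) \<Rightarrow> 'a \<Rightarrow> 'c \<Rightarrow> 'l" where
  "rcomp R S x t = (SUP y. R x y \<otimes> S y t)"

definition rconv :: "('a \<Rightarrow> 'b \<Rightarrow> 'l) \<Rightarrow> 'b \<Rightarrow> 'a \<Rightarrow> 'l" where
  "rconv R y x = R x y"

definition kernel :: "('a \<Rightarrow> 'b \<Rightarrow> 'l::cres_lattice) \<Rightarrow> 'a \<Rightarrow> 'a \<Rightarrow> 'l" where
  "kernel R a1 a2 = (INF b. biimp (R a1 b) (R a2 b))"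

definition cokernel :: "('a \<Rightarrow> 'b \<Rightarrow> 'l::cres_lattice) \<Rightarrow> 'b \<Rightarrow> 'b \<Rightarrow> 'l" where
  "cokernel R b1 b2 = (INF a. biimp (R a b1) (R a b2))"

definition uniform_rel :: "('a \<Rightarrow> 'b \<Rightarrow> 'l::cres_lattice) \<Rightarrow> bool" where
  "uniform_rel R \<longleftrightarrow> (\<forall>a. \<exists>b. R a b = top) \<and> (\<forall>b. \<exists>a. R a b = top)
     \<and> (\<forall>a b1 b2. R a b1 \<otimes> R a b2 \<le> cokernel R b1 b2)"

text \<open>Equivalence classes E_x are the functions E x; the quotient set X/E is range E.\<close>

definition quot_rel :: "('a \<Rightarrow> 'a \<Rightarrow> 'l::cres_lattice) \<Rightarrow> ('a \<Rightarrow> 'a \<Rightarrow> 'l) \<Rightarrow>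
    ('a \<Rightarrow> 'l) \<Rightarrow> ('a \<Rightarrow> 'l) \<Rightarrow> 'l" where
  "quot_rel E V c1 c2 = rcomp (rcomp E V) E (SOME x1. E x1 = c1) (SOME x2. E x2 = c2)"

text \<open>psi: a function with R a (psi a) = 1; Rtilde (E_a) = F_(psi a).\<close>

definition psi :: "('a \<Rightarrow> 'b \<Rightarrow> 'l::cres_lattice) \<Rightarrow> 'a \<Rightarrow> 'b" where
  "psi R a = (SOME b. R a b = top)"

definition rtilde :: "('a \<Rightarrow> 'b \<Rightarrow> 'l::cres_lattice) \<Rightarrow> ('a \<Rightarrow> 'l) \<Rightarrow> ('b \<Rightarrow> 'l)" where
  "rtilde R c = cokernel R (psi R (SOME a. kernel R a = c))"

definition fs_iso :: "'x set \<Rightarrow> ('i \<Rightarrow> 'x \<Rightarrow> 'x \<Rightarrow> 'l) \<Rightarrow> 'y set \<Rightarrow> ('i \<Rightarrow> 'y \<Rightarrow> 'y \<Rightarrow> 'l)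
    \<Rightarrow> ('x \<Rightarrow> 'y) \<Rightarrow> bool" where
  "fs_iso X V Y W \<phi> \<longleftrightarrow> bij_betw \<phi> X Y \<and>
     (\<forall>i. \<forall>x1\<in>X. \<forall>x2\<in>X. V i x1 x2 = W i (\<phi> x1) (\<phi> x2))"

definition WL25 :: "('i \<Rightarrow> 'a \<Rightarrow> 'a \<Rightarrow> 'l::cres_lattice) \<Rightarrow> ('i \<Rightarrow> 'b \<Rightarrow> 'b \<Rightarrow> 'l)
    \<Rightarrow> ('a \<Rightarrow> 'b \<Rightarrow> 'l) \<Rightarrow> ('a \<Rightarrow> 'b \<Rightarrow> 'l) \<Rightarrow> bool" where
  "WL25 V W Z U \<longleftrightarrow> (\<forall>i. rcomp (V i) U = rcomp U (W i)) \<and> U \<le> Z"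

definition WL14 :: "('i \<Rightarrow> 'a \<Rightarrow> 'a \<Rightarrow> 'l::cres_lattice) \<Rightarrow> ('a \<Rightarrow> 'a \<Rightarrow> 'l)
    \<Rightarrow> ('a \<Rightarrow> 'a \<Rightarrow> 'l) \<Rightarrow> bool" where
  "WL14 V W U \<longleftrightarrow> (\<forall>i. rcomp U (V i) \<le> rcomp (V i) U \<and> rcomp (rconv U) (V i) \<le> rcomp (V i) (rconv U))
     \<and> U \<le> W \<and> rconv U \<le> W"

definition WL15 :: "('i \<Rightarrow> 'a \<Rightarrow> 'a \<Rightarrow> 'l::cres_lattice) \<Rightarrow> ('a \<Rightarrow> 'a \<Rightarrow> 'l)
    \<Rightarrow> ('a \<Rightarrow> 'a \<Rightarrow> 'l) \<Rightarrow> bool" where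
  "WL15 V W U \<longleftrightarrow> (\<forall>i. rcomp (V i) U \<le> rcomp U (V i) \<and> rcomp (V i) (rconv U) \<le> rcomp (rconv U) (V i))
     \<and> U \<le> W \<and> rconv U \<le> W"

end

theory Submission
  imports Defs
begin

context cres_lattice
begin

lemma mult_mono1: assumes "x \<le> y" shows "x \<otimes> z \<le> y \<otimes> z"
proof -
  have "y \<le> rimp z (y \<otimes> z)" by (subst residuation[symmetric]) (rule order.refl)
  with assms have "x \<le> rimp z (y \<otimes> z)" by (rule order.trans)
  thus ?thesis by (subst residuation)
qed

lemma mult_mono': assumes "x \<le> y" "u \<le> v" shows "x \<otimes> u \<le> y \<otimes> v"
proof -
  have "x \<otimes> u \<le> y \<otimes> u" using assms(1) by (rule mult_mono1)
  also have "y \<otimes> u = u \<otimes> y" by (rule rmult_commute)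
  also have "u \<otimes> y \<le> v \<otimes> y" using assms(2) by (rule mult_mono1)
  also have "v \<otimes> y = y \<otimes> v" by (rule rmult_commute)
  finally show ?thesis .
qed

lemma top_mult[simp]: "top \<otimes> x = x"
proof -
  have "top \<otimes> x = x \<otimes> top" by (rule rmult_commute)
  also have "\<dots> = x" by (rule rmult_top)
  finally show ?thesis .
qed

lemma SUP_mult: "(SUP i. f i) \<otimes> x = (SUP i. f i \<otimes> x)"
proof (rule order.antisym)
  have "(SUP i. f i) \<le> rimp x (SUP i. f i \<otimes> x)"
  proof (rule SUP_least)
    fix i
    have "f i \<otimes> x \<le> (SUP i. f i \<otimes> x)" by (rule SUP_upper) simp
    thus "f i \<le> rimp x (SUP i. f i \<otimes> x)" by (subst residuation[symmetric])
  qed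
  then show "(SUP i. f i) \<otimes> x \<le> (SUP i. f i \<otimes> x)" by (subst residuation)
next
  show "(SUP i. f i \<otimes> x) \<le> (SUP i. f i) \<otimes> x"
  proof (rule SUP_least)
    fix i
    have "f i \<le> (SUP i. f i)" by (rule SUP_upper) simp
    thus "f i \<otimes> x \<le> (SUP i. f i) \<otimes> x" by (rule mult_mono1)
  qed
qed

lemma mult_SUP: "x \<otimes> (SUP i. f i) = (SUP i. x \<otimes> f i)"
proof -
  have "x \<otimes> (SUP i. f i) = (SUP i. f i) \<otimes> x" by (rule rmult_commute)
  also have "\<dots> = (SUP i. f i \<otimes> x)" by (rule SUP_mult)
  also have "\<dots> = (SUP i. x \<otimes> f i)" by (intro SUP_cong refl rmult_commute)
  finally show ?thesis .
qed

lemma mp_rimp: "x \<otimes> rimp x y \<le> y"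
proof -
  have "rimp x y \<otimes> x \<le> y" by (subst residuation) (rule order.refl)
  thus ?thesis by (subst rmult_commute)
qed

lemma rimp_refl: "rimp x x = top"
proof (rule order.antisym)
  show "rimp x x \<le> top" by (rule top_greatest)
  have "top \<otimes> x \<le> x" by simp
  thus "top \<le> rimp x x" by (subst residuation[symmetric])
qed

lemma rimp_top: "rimp top x = x"
proof (rule order.antisym)
  have "rimp top x \<otimes> top \<le> x" by (subst residuation) (rule order.refl)
  thus "rimp top x \<le> x" by (simp only: rmult_top)
  have "x \<otimes> top \<le> x" by (simp only: rmult_top order.refl)
  thus "x \<le> rimp top x" by (subst residuation[symmetric])
qed

lemma rimp_trans: "rimp x y \<otimes> rimp y z \<le> rimp x z"
proof -
  have "(rimp x y \<otimes> rimp y z) \<otimes> x = x \<otimes> (rimp x y \<otimes> rimp y z)" by (rule rmult_commute)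
  also have "\<dots> = (x \<otimes> rimp x y) \<otimes> rimp y z" by (rule rmult_assoc[symmetric])
  also have "\<dots> \<le> y \<otimes> rimp y z" by (rule mult_mono1[OF mp_rimp])
  also have "\<dots> \<le> z" by (rule mp_rimp)
  finally show ?thesis by (subst residuation[symmetric])
qed

end

declare rmult_top[simp]

lemma biimp_refl[simp]: "biimp x x = top"
  by (simp add: biimp_def rimp_refl)

lemma biimp_sym: "biimp x y = biimp y x"
  by (simp add: biimp_def inf_commute)

lemma biimp_le: "biimp x y \<le> rimp x y"
  by (simp add: biimp_def)

lemma biimp_trans: "biimp x y \<otimes> biimp y z \<le> biimp x z"
proof -
  have 1: "biimp x y \<otimes> biimp y z \<le> rimp x y \<otimes> rimp y z"
    by (intro mult_mono') (simp_all add: biimp_def)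
  have 2: "biimp x y \<otimes> biimp y z \<le> rimp z y \<otimes> rimp y x"
  proof -
    have "biimp x y \<otimes> biimp y z = biimp y z \<otimes> biimp x y" by (rule rmult_commute)
    also have "\<dots> \<le> rimp z y \<otimes> rimp y x"
      by (intro mult_mono') (simp_all add: biimp_def)
    finally show ?thesis .
  qed
  have 3: "biimp x y \<otimes> biimp y z \<le> rimp x z" using order.trans[OF 1 rimp_trans] .
  have 4: "biimp x y \<otimes> biimp y z \<le> rimp z x" using order.trans[OF 2 rimp_trans] .
  show ?thesis unfolding biimp_def[of x z] using 3 4 by (rule le_infI)
qed

lemma rcomp_assoc: "rcomp (rcomp R S) T = rcomp R (rcomp S T)"
proof (intro ext)
  fix x t
  have "rcomp (rcomp R S) T x t = (SUP z. SUP y. (R x y \<otimes> S y z) \<otimes> T z t)"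
    by (simp add: rcomp_def SUP_mult)
  also have "\<dots> = (SUP y. SUP z. R x y \<otimes> (S y z \<otimes> T z t))"
    by (subst SUP_commute) (simp add: rmult_assoc)
  also have "\<dots> = rcomp R (rcomp S T) x t"
    by (simp add: rcomp_def mult_SUP)
  finally show "rcomp (rcomp R S) T x t = rcomp R (rcomp S T) x t" .
qed

lemma rcomp_mono: "R \<le> R' \<Longrightarrow> S \<le> S' \<Longrightarrow> rcomp R S \<le> rcomp R' S'"
  unfolding le_fun_def rcomp_def
  by (intro allI SUP_mono) (blast intro: mult_mono')

lemma rconv_mono: "R \<le> R' \<Longrightarrow> rconv R \<le> rconv R'"
  unfolding le_fun_def rconv_def by auto

lemma rcomp_refl_right: assumes "\<And>y. E y y = top" shows "S \<le> rcomp S E"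
proof (intro le_funI)
  fix x z
  have "S x z \<otimes> E z z \<le> (SUP y. S x y \<otimes> E y z)" by (rule SUP_upper) simp
  thus "S x z \<le> rcomp S E x z" by (simp add: rcomp_def assms)
qed

lemma rcomp_refl_left: assumes "\<And>y. E y y = top" shows "S \<le> rcomp E S"
proof (intro le_funI)
  fix x z
  have "E x x \<otimes> S x z \<le> (SUP y. E x y \<otimes> S y z)" by (rule SUP_upper) simp
  thus "S x z \<le> rcomp E S x z" by (simp add: rcomp_def assms)
qed

lemma rcomp_absorb_left:
  assumes "\<And>y. E y y = top" "\<And>x y z. E x y \<otimes> S y z \<le> S x z"
  shows "rcomp E S = S"
proof (rule order.antisym)
  show "rcomp E S \<le> S" unfolding le_fun_def rcomp_def
    using assms(2) by (auto intro: SUP_least)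
qed (rule rcomp_refl_left[OF assms(1)])

lemma rcomp_absorb_right:
  assumes "\<And>y. E y y = top" "\<And>x y z. S x y \<otimes> E y z \<le> S x z"
  shows "rcomp S E = S"
proof (rule order.antisym)
  show "rcomp S E \<le> S" unfolding le_fun_def rcomp_def
    using assms(2) by (auto intro: SUP_least)
qed (rule rcomp_refl_right[OF assms(1)])

lemma quot_rel_eval:
  assumes sym: "\<And>x y. E x y = E y x"
  shows "quot_rel E V (E a1) (E a2) = rcomp (rcomp E V) E a1 a2"
proof -
  have eq: "rcomp (rcomp E V) E x y = (SUP z. rcomp E V x z \<otimes> E y z)" for x y
    by (simp add: rcomp_def sym[of _ y])
  have h: "rcomp (rcomp E V) E x1 x2 = rcomp (rcomp E V) E a1 a2"
    if "E x1 = E a1" "E x2 = E a2" for x1 x2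
    unfolding eq by (simp add: rcomp_def that)
  show ?thesis unfolding quot_rel_def
    by (rule h) (rule someI[of "\<lambda>x. E x = E _"], rule refl)+
qed

lemma equiv_top:
  assumes sym: "\<And>x y. F x y = F y x" and tr: "\<And>x y z. F x y \<otimes> F y z \<le> F x z"
    and t: "F x y = top"
  shows "F x = F y"
proof
  fix z
  have "F x z \<le> F y z" using tr[of y x z] by (simp add: sym[of y x] t)
  moreover have "F y z \<le> F x z" using tr[of x y z] by (simp add: t)
  ultimately show "F x z = F y z" by (rule order.antisym)
qed


lemma equiv_kernel_eq:
  assumes sym: "\<And>x y. F x y = F y x" and tr: "\<And>x y z. F x y \<otimes> F y z \<le> F x z"
    and rf: "\<And>x. F x x = top"
  shows "(INF b. biimp (F x b) (F y b)) = F x y"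
proof (rule order.antisym)
  have "(INF b. biimp (F x b) (F y b)) \<le> biimp (F x y) (F y y)" by (rule INF_lower) simp
  also have "\<dots> \<le> rimp (F y y) (F x y)" unfolding biimp_def by simp
  also have "\<dots> = F x y" by (simp add: rf rimp_top)
  finally show "(INF b. biimp (F x b) (F y b)) \<le> F x y" .
next
  show "F x y \<le> (INF b. biimp (F x b) (F y b))"
  proof (rule INF_greatest)
    fix b
    have "F x y \<otimes> F x b \<le> F y b" using tr[of y x b] by (simp add: sym[of y x])
    hence 1: "F x y \<le> rimp (F x b) (F y b)" by (simp add: residuation)
    have "F x y \<otimes> F y b \<le> F x b" using tr[of x y b] .
    hence 2: "F x y \<le> rimp (F y b) (F x b)" by (simp add: residuation)
    show "F x y \<le> biimp (F x b) (F y b)" using 1 2 by (simp add: biimp_def)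
  qed
qed

lemma equiv_comp_eq:
  assumes sym: "\<And>x y. F x y = F y x" and tr: "\<And>x y z. F x y \<otimes> F y z \<le> F x z"
    and rf: "\<And>x. F x x = top"
  shows "(SUP b. F x b \<otimes> F y b) = F x y"
proof (rule order.antisym)
  show "(SUP b. F x b \<otimes> F y b) \<le> F x y"
  proof (rule SUP_least)
    fix b show "F x b \<otimes> F y b \<le> F x y" using tr[of x b y] by (simp add: sym[of y b])
  qed
  have "F x y \<otimes> F y y \<le> (SUP b. F x b \<otimes> F y b)" by (rule SUP_upper) simp
  thus "F x y \<le> (SUP b. F x b \<otimes> F y b)" by (simp add: rf)
qed

theorem theorem7p4:
  fixes V :: "'i \<Rightarrow> 'a \<Rightarrow> 'a \<Rightarrow> 'l::cres_lattice"
    and W :: "'i \<Rightarrow> 'b \<Rightarrow> 'b \<Rightarrow> 'l"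
    and R Z :: "'a \<Rightarrow> 'b \<Rightarrow> 'l"
  assumes "uniform_rel R" and "R \<le> Z"
  shows "WL25 V W Z R \<longleftrightarrow>
      WL14 V (rcomp Z (rconv Z)) (kernel R)
    \<and> WL15 W (rcomp (rconv Z) Z) (cokernel R)
    \<and> fs_iso (range (kernel R)) (\<lambda>i. quot_rel (kernel R) (V i))
             (range (cokernel R)) (\<lambda>i. quot_rel (cokernel R) (W i)) (rtilde R)"
proof -
  define E where "E = kernel R"
  define F where "F = cokernel R"
  define p where "p = psi R"
  have U1: "\<forall>a. \<exists>b. R a b = top" and U2: "\<forall>b. \<exists>a. R a b = top"
    and U3: "\<And>a b1 b2. R a b1 \<otimes> R a b2 \<le> F b1 b2"
    using assms(1) unfolding uniform_rel_def F_def by auto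
  have Rp: "R a (p a) = top" for a unfolding p_def psi_def by (rule someI_ex) (use U1 in blast)
  have F2: "F b1 b2 \<otimes> R a b1 \<le> R a b2" for a b1 b2
  proof -
    have "F b1 b2 \<le> rimp (R a b1) (R a b2)"
      unfolding F_def cokernel_def
    proof (rule order.trans[OF _ biimp_le])
      show "(INF a. biimp (R a b1) (R a b2)) \<le> biimp (R a b1) (R a b2)" by (rule INF_lower) simp
    qed
    hence "F b1 b2 \<otimes> R a b1 \<le> rimp (R a b1) (R a b2) \<otimes> R a b1" by (rule mult_mono1)
    also have "\<dots> = R a b1 \<otimes> rimp (R a b1) (R a b2)" by (rule rmult_commute)
    also have "\<dots> \<le> R a b2" by (rule mp_rimp)
    finally show ?thesis .
  qed
  have Frefl: "F b b = top" for b unfolding F_def cokernel_def by simp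
  have Fsym: "F x y = F y x" for x y unfolding F_def cokernel_def by (simp add: biimp_sym)
  have Ftr: "F x y \<otimes> F y z \<le> F x z" for x y z
    unfolding F_def cokernel_def
  proof (rule INF_greatest)
    fix a
    have "(INF a. biimp (R a x) (R a y)) \<otimes> (INF a. biimp (R a y) (R a z))
          \<le> biimp (R a x) (R a y) \<otimes> biimp (R a y) (R a z)"
      by (intro mult_mono' INF_lower) simp_all
    also have "\<dots> \<le> biimp (R a x) (R a z)" by (rule biimp_trans)
    finally show "(INF a. biimp (R a x) (R a y)) \<otimes> (INF a. biimp (R a y) (R a z))
          \<le> biimp (R a x) (R a z)" .
  qed
  have F3: "R a b = F (p a) b" for a b
  proof (rule order.antisym)
    show "R a b \<le> F (p a) b" using U3[of a "p a" b] by (simp add: Rp)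
    show "F (p a) b \<le> R a b" using F2[of "p a" b a] by (simp add: Rp)
  qed
  have F3': "F (p a) b = R a b" "F b (p a) = R a b" for a b using F3 Fsym by auto
  have F4: "E a1 a2 = F (p a1) (p a2)" for a1 a2
    unfolding E_def kernel_def F3
    by (rule equiv_kernel_eq) (fact Fsym Ftr Frefl)+
  have Esym: "E x y = E y x" for x y by (simp add: F4 Fsym)
  have Erefl: "E x x = top" for x by (simp add: F4 Frefl)
  have Etr: "E x y \<otimes> E y z \<le> E x z" for x y z by (simp add: F4 Ftr)
  have ERR: "E = rcomp R (rconv R)"
  proof (intro ext)
    fix x y
    show "E x y = rcomp R (rconv R) x y"
      unfolding rcomp_def rconv_def F3 F4 by (rule equiv_comp_eq[OF Fsym Ftr Frefl, symmetric])
  qed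
  have FRR: "F = rcomp (rconv R) R"
  proof (intro ext order.antisym)
    fix b1 b2
    show "rcomp (rconv R) R b1 b2 \<le> F b1 b2"
      unfolding rcomp_def rconv_def by (rule SUP_least) (rule U3)
    obtain a where a: "R a b1 = top" using U2 by blast
    have "F b1 b2 \<le> R a b1 \<otimes> R a b2" using F2[of b1 b2 a] by (simp add: a)
    also have "\<dots> \<le> rcomp (rconv R) R b1 b2"
      unfolding rcomp_def rconv_def by (rule SUP_upper) simp
    finally show "F b1 b2 \<le> rcomp (rconv R) R b1 b2" .
  qed
  have ER: "rcomp E R = R"
    by (rule rcomp_absorb_left[OF Erefl]) (simp add: F3 F4 Ftr)
  have RF: "rcomp R F = R"
    by (rule rcomp_absorb_right[OF Frefl]) (rule order.trans[OF eq_refl[OF rmult_commute] F2])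
  have EE: "rcomp E E = E" by (rule rcomp_absorb_left[OF Erefl Etr])
  have FF: "rcomp F F = F" by (rule rcomp_absorb_left[OF Frefl Ftr])
  have Econv: "rconv E = E" by (simp add: fun_eq_iff rconv_def Esym)
  have Fconv: "rconv F = F" by (simp add: fun_eq_iff rconv_def Fsym)
  have RT: "rtilde R (E a) = F (p a)" for a
  proof -
    define a' where "a' = (SOME a'. E a' = E a)"
    have "E a' = E a" unfolding a'_def by (rule someI) (rule refl)
    hence "E a' a = top" by (simp add: Erefl)
    hence "F (p a') (p a) = top" by (simp add: F4)
    hence "F (p a') = F (p a)" by (rule equiv_top[OF Fsym Ftr])
    thus ?thesis unfolding rtilde_def a'_def E_def F_def p_def by simp
  qed
  have FWF: "rcomp (rcomp F W') F (p a1) (p a2) = rcomp (rcomp R W') (rconv R) a1 a2" for W' a1 a2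
    by (simp add: rcomp_def rconv_def F3')
  have iso_iff: "(\<forall>i. \<forall>x1\<in>range E. \<forall>x2\<in>range E.
       quot_rel E (V i) x1 x2 = quot_rel F (W i) (rtilde R x1) (rtilde R x2))
     \<longleftrightarrow> (\<forall>i. rcomp (rcomp E (V i)) E = rcomp (rcomp R (W i)) (rconv R))"
  proof -
    have QE: "quot_rel E (V i) (E a1) (E a2) = rcomp (rcomp E (V i)) E a1 a2" for i a1 a2
      by (rule quot_rel_eval) (rule Esym)
    have QF: "quot_rel F (W i) (F b1) (F b2) = rcomp (rcomp F (W i)) F b1 b2" for i b1 b2
      by (rule quot_rel_eval) (rule Fsym)
    show ?thesis by (simp add: RT QE QF FWF fun_eq_iff)
  qed
  have bij: "bij_betw (rtilde R) (range E) (range F)"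
    unfolding bij_betw_def
  proof
    show "inj_on (rtilde R) (range E)"
    proof (rule inj_onI, clarify)
      fix a1 a2 assume "rtilde R (E a1) = rtilde R (E a2)"
      hence "F (p a1) = F (p a2)" by (simp add: RT)
      hence "E a1 a2 = top" by (simp add: F4 Frefl)
      thus "E a1 = E a2" by (rule equiv_top[OF Esym Etr])
    qed
    show "rtilde R ` range E = range F"
    proof (rule set_eqI, rule iffI)
      fix c assume "c \<in> rtilde R ` range E"
      thus "c \<in> range F" by (auto simp: RT)
    next
      fix c assume "c \<in> range F"
      then obtain b where b: "c = F b" by blast
      obtain a where a: "R a b = top" using U2 by blast
      have "F (p a) = F b" by (rule equiv_top[OF Fsym Ftr]) (use a F3[of a b] in simp)
      thus "c \<in> rtilde R ` range E" unfolding b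
        by (intro image_eqI[of _ _ "E a"]) (simp_all add: RT)
    qed
  qed
  have main: "(\<forall>i. rcomp (V i) R = rcomp R (W i)) \<longleftrightarrow>
      (\<forall>i. rcomp E (V i) \<le> rcomp (V i) E)
    \<and> (\<forall>i. rcomp (W i) F \<le> rcomp F (W i))
    \<and> (\<forall>i. rcomp (rcomp E (V i)) E = rcomp (rcomp R (W i)) (rconv R))"
  proof
    assume H: "\<forall>i. rcomp (V i) R = rcomp R (W i)"
    have VE: "rcomp (V i) E = rcomp (rcomp R (W i)) (rconv R)" for i
      by (simp add: ERR rcomp_assoc[symmetric] H)
    have EVE: "rcomp (rcomp E (V i)) E = rcomp (rcomp R (W i)) (rconv R)" for i
    proof -
      have "rcomp (rcomp E (V i)) E = rcomp E (rcomp (V i) E)" by (rule rcomp_assoc)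
      also have "\<dots> = rcomp (rcomp (rcomp E R) (W i)) (rconv R)" by (simp add: VE rcomp_assoc)
      also have "\<dots> = rcomp (rcomp R (W i)) (rconv R)" by (simp add: ER)
      finally show ?thesis .
    qed
    have FW: "rcomp F (W i) = rcomp (rcomp (rconv R) (V i)) R" for i
      by (simp add: FRR rcomp_assoc H)
    have FWF: "rcomp (rcomp F (W i)) F = rcomp F (W i)" for i
    proof -
      have "rcomp (rcomp F (W i)) F = rcomp (rcomp (rconv R) (V i)) (rcomp (rcomp R (rconv R)) R)"
        by (simp only: FW) (simp only: FRR rcomp_assoc)
      also have "\<dots> = rcomp F (W i)" by (simp add: ERR[symmetric] ER FW)
      finally show ?thesis .
    qed
    show "(\<forall>i. rcomp E (V i) \<le> rcomp (V i) E)
    \<and> (\<forall>i. rcomp (W i) F \<le> rcomp F (W i))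
    \<and> (\<forall>i. rcomp (rcomp E (V i)) E = rcomp (rcomp R (W i)) (rconv R))"
    proof (intro conjI allI)
      fix i
      show "rcomp E (V i) \<le> rcomp (V i) E"
        using rcomp_refl_right[where S="rcomp E (V i)" and E=E, OF Erefl] by (simp add: EVE VE)
      show "rcomp (W i) F \<le> rcomp F (W i)"
        using rcomp_refl_left[where S="rcomp (W i) F" and E=F, OF Frefl] FWF[of i] by (simp add: rcomp_assoc)
      show "rcomp (rcomp E (V i)) E = rcomp (rcomp R (W i)) (rconv R)" by (rule EVE)
    qed
  next
    assume A: "(\<forall>i. rcomp E (V i) \<le> rcomp (V i) E)
    \<and> (\<forall>i. rcomp (W i) F \<le> rcomp F (W i))
    \<and> (\<forall>i. rcomp (rcomp E (V i)) E = rcomp (rcomp R (W i)) (rconv R))"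
    show "\<forall>i. rcomp (V i) R = rcomp R (W i)"
    proof
      fix i
      have VE: "rcomp (V i) E = rcomp (rcomp E (V i)) E"
      proof (rule order.antisym)
        show "rcomp (V i) E \<le> rcomp (rcomp E (V i)) E"
          using rcomp_refl_left[where S="rcomp (V i) E" and E=E, OF Erefl] by (simp add: rcomp_assoc)
        have "rcomp (rcomp E (V i)) E \<le> rcomp (rcomp (V i) E) E"
          by (rule rcomp_mono) (use A in blast)+
        also have "\<dots> = rcomp (V i) E" by (simp add: rcomp_assoc EE)
        finally show "rcomp (rcomp E (V i)) E \<le> rcomp (V i) E" .
      qed
      have FW: "rcomp F (W i) = rcomp (rcomp F (W i)) F"
      proof (rule order.antisym)
        show "rcomp F (W i) \<le> rcomp (rcomp F (W i)) F"
          by (rule rcomp_refl_right[OF Frefl])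
        have "rcomp (rcomp F (W i)) F = rcomp F (rcomp (W i) F)" by (rule rcomp_assoc)
        also have "\<dots> \<le> rcomp F (rcomp F (W i))"
          by (rule rcomp_mono) (use A in blast)+
        also have "\<dots> = rcomp F (W i)" by (simp add: rcomp_assoc[symmetric] FF)
        finally show "rcomp (rcomp F (W i)) F \<le> rcomp F (W i)" .
      qed
      have "rcomp (V i) R = rcomp (rcomp (V i) E) R" by (simp add: rcomp_assoc ER)
      also have "\<dots> = rcomp (rcomp (rcomp R (W i)) (rconv R)) R" using A VE by simp
      also have "\<dots> = rcomp R (rcomp (W i) F)" by (simp add: FRR rcomp_assoc)
      also have "\<dots> = rcomp (rcomp R F) (rcomp (W i) F)" by (simp add: RF)
      also have "\<dots> = rcomp R (rcomp F (W i))" using FW by (simp add: rcomp_assoc)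
      also have "\<dots> = rcomp R (W i)" by (simp add: rcomp_assoc[symmetric] RF)
      finally show "rcomp (V i) R = rcomp R (W i)" .
    qed
  qed
  have EZ: "E \<le> rcomp Z (rconv Z)"
    unfolding ERR by (intro rcomp_mono rconv_mono assms(2))
  have FZ: "F \<le> rcomp (rconv Z) Z"
    unfolding FRR by (intro rcomp_mono rconv_mono assms(2))
  have L25: "WL25 V W Z R \<longleftrightarrow> (\<forall>i. rcomp (V i) R = rcomp R (W i))"
    unfolding WL25_def using assms(2) by blast
  have L14: "WL14 V (rcomp Z (rconv Z)) E \<longleftrightarrow> (\<forall>i. rcomp E (V i) \<le> rcomp (V i) E)"
    unfolding WL14_def Econv using EZ by blast
  have L15: "WL15 W (rcomp (rconv Z) Z) F \<longleftrightarrow> (\<forall>i. rcomp (W i) F \<le> rcomp F (W i))"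
    unfolding WL15_def Fconv using FZ by blast
  have LI: "fs_iso (range E) (\<lambda>i. quot_rel E (V i)) (range F) (\<lambda>i. quot_rel F (W i)) (rtilde R)
     \<longleftrightarrow> (\<forall>i. rcomp (rcomp E (V i)) E = rcomp (rcomp R (W i)) (rconv R))"
    unfolding fs_iso_def using bij iso_iff by simp
  show ?thesis
    unfolding E_def[symmetric] F_def[symmetric] L25 L14 L15 LI by (rule main)
qed

end
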